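(* Let $(A,G,\alpha)$ be a C*-dynamical system and $(J,H,\beta)$ a regular C*-dynamical subsystem. Then $(A,G,\alpha)$ is sub-induced from $(J,H,\beta)$ if and only if $H=\{g\in G:\alpha_g(J)=J\}$ and the ideals $\{\alpha_g(J)\}_{gH\in G/H}$ are pairwise orthogonal.
   Context: A C*-dynamical system $(A,G,\alpha)$: C*-algebra $A$, discrete group $G$, action $\alpha$. A closed ideal is regular if $J=J^{\perp\perp}$ ($X^\perp=\{a:ax=xa=0\ \forall x\in X\}$); ideals are orthogonal if they intersect trivially. A regular C*-dynamical subsystem $(J,H,\beta)$: $H\le G$, $J$ an $H$-invariant regular ideal of $A$, $\beta$ the restriction of $\alpha$. A system $(K,G,\gamma)$ is induced from $(J,H,\beta)$ if $\{\gamma_g(J)\}_{gH\in G/H}$ are pairwise orthogonal, $(\bigcup_g\gamma_g(J))^{\perp\perp}=K$, and $H=\{g:\gamma_g(J)=J\}$. $(A,G,\alpha)$ is sub-induced from $(J,H,\beta)$ if there is a nonzero $G$-invariant regular ideal $K\trianglelefteq A$ containing $J$ such that $(K,G,\alpha|_K)$ is induced from $(J,H,\beta)$. *)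

theory Defs
  imports "HOL-Analysis.Analysis" "HOL-Algebra.Coset"
begin

text \<open>A (not necessarily unital) C*-algebra: the whole type 'a, a real Banach algebra,
  equipped with a complex scalar multiplication sc (extending the real one) and an involution st.\<close>

definition cstar_algebra ::
  "(complex \<Rightarrow> 'a::{real_normed_algebra,banach} \<Rightarrow> 'a) \<Rightarrow> ('a \<Rightarrow> 'a) \<Rightarrow> bool" where
  "cstar_algebra sc st \<longleftrightarrow>
     (\<forall>r x. sc (complex_of_real r) x = scaleR r x) \<and>
     (\<forall>a b x. sc (a + b) x = sc a x + sc b x) \<and>
     (\<forall>a x y. sc a (x + y) = sc a x + sc a y) \<and>
     (\<forall>a b x. sc (a * b) x = sc a (sc b x)) \<and>
     (\<forall>a x. norm (sc a x) = norm a * norm x) \<and>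
     (\<forall>a x y. sc a (x * y) = sc a x * y \<and> sc a (x * y) = x * sc a y) \<and>
     (\<forall>x. st (st x) = x) \<and>
     (\<forall>x y. st (x + y) = st x + st y) \<and>
     (\<forall>a x. st (sc a x) = sc (cnj a) (st x)) \<and>
     (\<forall>x y. st (x * y) = st y * st x) \<and>
     (\<forall>x. norm (st x * x) = (norm x)\<^sup>2)"

definition star_aut ::
  "(complex \<Rightarrow> 'a::{real_normed_algebra,banach} \<Rightarrow> 'a) \<Rightarrow> ('a \<Rightarrow> 'a) \<Rightarrow> ('a \<Rightarrow> 'a) \<Rightarrow> bool" where
  "star_aut sc st f \<longleftrightarrow> bij f \<and>
     (\<forall>x y. f (x + y) = f x + f y) \<and> (\<forall>x y. f (x * y) = f x * f y) \<and>
     (\<forall>a x. f (sc a x) = sc a (f x)) \<and> (\<forall>x. f (st x) = st (f x))"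

definition cstar_dyn_system ::
  "(complex \<Rightarrow> 'a::{real_normed_algebra,banach} \<Rightarrow> 'a) \<Rightarrow> ('a \<Rightarrow> 'a) \<Rightarrow> ('g, 'm) monoid_scheme
     \<Rightarrow> ('g \<Rightarrow> 'a \<Rightarrow> 'a) \<Rightarrow> bool" where
  "cstar_dyn_system sc st G \<alpha> \<longleftrightarrow> cstar_algebra sc st \<and> group G \<and>
     (\<forall>g\<in>carrier G. star_aut sc st (\<alpha> g)) \<and>
     \<alpha> \<one>\<^bsub>G\<^esub> = id \<and>
     (\<forall>g\<in>carrier G. \<forall>h\<in>carrier G. \<alpha> (g \<otimes>\<^bsub>G\<^esub> h) = \<alpha> g \<circ> \<alpha> h)"

definition closed_ideal ::
  "(complex \<Rightarrow> 'a::{real_normed_algebra,banach} \<Rightarrow> 'a) \<Rightarrow> 'a set \<Rightarrow> bool" where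
  "closed_ideal sc J \<longleftrightarrow> closed J \<and> 0 \<in> J \<and>
     (\<forall>x\<in>J. \<forall>y\<in>J. x + y \<in> J) \<and> (\<forall>a. \<forall>x\<in>J. sc a x \<in> J) \<and>
     (\<forall>x\<in>J. \<forall>b. b * x \<in> J \<and> x * b \<in> J)"

text \<open>Annihilator of X computed inside the (sub)algebra K (K = UNIV for A itself).\<close>
definition perp_in :: "'a::ring set \<Rightarrow> 'a set \<Rightarrow> 'a set" where
  "perp_in K X = {a \<in> K. \<forall>x\<in>X. a * x = 0 \<and> x * a = 0}"

definition regular_ideal ::
  "(complex \<Rightarrow> 'a::{real_normed_algebra,banach} \<Rightarrow> 'a) \<Rightarrow> 'a set \<Rightarrow> bool" where
  "regular_ideal sc J \<longleftrightarrow> closed_ideal sc J \<and> J = perp_in UNIV (perp_in UNIV J)"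

definition orthogonal_ideals :: "'a::zero set \<Rightarrow> 'a set \<Rightarrow> bool" where
  "orthogonal_ideals I J \<longleftrightarrow> I \<inter> J = {0}"

text \<open>Regular C*-dynamical subsystem (J,H,beta), beta = restriction of alpha.\<close>
definition regular_subsystem ::
  "(complex \<Rightarrow> 'a::{real_normed_algebra,banach} \<Rightarrow> 'a) \<Rightarrow> ('g, 'm) monoid_scheme
     \<Rightarrow> ('g \<Rightarrow> 'a \<Rightarrow> 'a) \<Rightarrow> 'a set \<Rightarrow> 'g set \<Rightarrow> bool" where
  "regular_subsystem sc G \<alpha> J H \<longleftrightarrow> subgroup H G \<and> regular_ideal sc J \<and>
     (\<forall>h\<in>H. \<alpha> h ` J = J)"

definition induced_from ::
  "('g, 'm) monoid_scheme \<Rightarrow> ('g \<Rightarrow> 'a::{real_normed_algebra,banach} \<Rightarrow> 'a) \<Rightarrow> 'a set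
     \<Rightarrow> 'a set \<Rightarrow> 'g set \<Rightarrow> bool" where
  "induced_from G \<alpha> K J H \<longleftrightarrow>
     (\<forall>g1\<in>carrier G. \<forall>g2\<in>carrier G. g1 <#\<^bsub>G\<^esub> H \<noteq> g2 <#\<^bsub>G\<^esub> H \<longrightarrow>
         orthogonal_ideals (\<alpha> g1 ` J) (\<alpha> g2 ` J)) \<and>
     perp_in K (perp_in K (\<Union>g\<in>carrier G. \<alpha> g ` J)) = K \<and>
     H = {g \<in> carrier G. \<alpha> g ` J = J}"

definition sub_induced_from ::
  "(complex \<Rightarrow> 'a::{real_normed_algebra,banach} \<Rightarrow> 'a) \<Rightarrow> ('g, 'm) monoid_scheme
     \<Rightarrow> ('g \<Rightarrow> 'a \<Rightarrow> 'a) \<Rightarrow> 'a set \<Rightarrow> 'g set \<Rightarrow> bool" where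
  "sub_induced_from sc G \<alpha> J H \<longleftrightarrow>
     (\<exists>K. K \<noteq> {0} \<and> regular_ideal sc K \<and> (\<forall>g\<in>carrier G. \<alpha> g ` K = K) \<and>
          J \<subseteq> K \<and> induced_from G \<alpha> K J H)"

end

theory Submission
  imports Defs
begin

lemma perp_sym: "X \<subseteq> perp_in UNIV (perp_in UNIV X)"
  unfolding perp_in_def by auto

lemma perp_anti: "X \<subseteq> Y \<Longrightarrow> perp_in K Y \<subseteq> perp_in K X"
  unfolding perp_in_def by auto

lemma perp3: "perp_in UNIV (perp_in UNIV (perp_in UNIV X)) = perp_in UNIV X"
  by (meson perp_anti perp_sym subset_antisym)

lemma perp_mult:
  fixes X :: "'a::ring set"
  assumes "\<forall>x\<in>X. \<forall>b. x * b \<in> X \<and> b * x \<in> X"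
  shows "\<forall>x\<in>perp_in UNIV X. \<forall>b. x * b \<in> perp_in UNIV X \<and> b * x \<in> perp_in UNIV X"
proof (intro ballI allI conjI)
  fix a b assume a: "a \<in> perp_in UNIV X"
  show "a * b \<in> perp_in UNIV X"
    unfolding perp_in_def
  proof (safe)
    show "a * b \<in> UNIV" by simp
    fix x assume x: "x \<in> X"
    have "a * (b * x) = 0" using a x assms unfolding perp_in_def by auto
    then show "a * b * x = 0" by (simp add: mult.assoc)
    have "x * a = 0" using a x unfolding perp_in_def by auto
    then show "x * (a * b) = 0" by (metis mult.assoc mult_zero_left)
  qed
  show "b * a \<in> perp_in UNIV X"
    unfolding perp_in_def
  proof (safe)
    show "b * a \<in> UNIV" by simp
    fix x assume x: "x \<in> X"
    have "a * x = 0" using a x unfolding perp_in_def by auto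
    then show "b * a * x = 0" by (metis mult.assoc mult_zero_right)
    have "(x * b) * a = 0" using a x assms unfolding perp_in_def by auto
    then show "x * (b * a) = 0" by (simp add: mult.assoc)
  qed
qed

lemma perp_closed:
  fixes X :: "'a::real_normed_algebra set"
  shows "closed (perp_in UNIV X)"
proof -
  have "perp_in UNIV X = (\<Inter>x\<in>X. {a. a * x = 0} \<inter> {a. x * a = 0})"
    unfolding perp_in_def by auto
  moreover have "closed ({a. a * x = 0} \<inter> {a. x * a = 0})" for x :: 'a
    by (intro closed_Int closed_Collect_eq continuous_intros)
  ultimately show ?thesis by auto
qed

lemma perp_closed_ideal:
  fixes X :: "'a::{real_normed_algebra,banach} set"
  assumes cs: "cstar_algebra sc st"
    and m: "\<forall>x\<in>X. \<forall>b. x * b \<in> X \<and> b * x \<in> X"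
  shows "closed_ideal sc (perp_in UNIV X)"
proof -
  have sc0: "sc a 0 = 0" for a
  proof -
    have "sc a (0 + 0) = sc a 0 + sc a 0" using cs unfolding cstar_algebra_def by blast
    then show ?thesis by simp
  qed
  have scm1: "sc a x * y = sc a (x * y)" and scm2: "x * sc a y = sc a (x * y)" for a x y
    using cs unfolding cstar_algebra_def by metis+
  show ?thesis
    unfolding closed_ideal_def
  proof (intro conjI ballI allI)
    show "closed (perp_in UNIV X)" by (rule perp_closed)
    show "0 \<in> perp_in UNIV X" unfolding perp_in_def by auto
    show "x + y \<in> perp_in UNIV X" if "x \<in> perp_in UNIV X" "y \<in> perp_in UNIV X" for x y
      using that unfolding perp_in_def by (auto simp: distrib_left distrib_right)
    show "sc a x \<in> perp_in UNIV X" if "x \<in> perp_in UNIV X" for a x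
      using that unfolding perp_in_def by (auto simp: sc0 scm1 scm2)
    show "b * x \<in> perp_in UNIV X" "x * b \<in> perp_in UNIV X" if "x \<in> perp_in UNIV X" for x b
      using perp_mult[OF m] that by auto
  qed
qed

lemma image_perp:
  fixes f :: "'a::ring \<Rightarrow> 'a"
  assumes "bij f" "\<forall>x y. f (x + y) = f x + f y" "\<forall>x y. f (x * y) = f x * f y"
  shows "f ` perp_in UNIV X = perp_in UNIV (f ` X)"
proof -
  have f0: "f 0 = 0" using assms(2) by (metis add_cancel_right_right add_0)
  have inj: "f a = 0 \<longleftrightarrow> a = 0" for a
    using f0 assms(1) by (metis bij_def injD)
  show ?thesis
  proof
    show "f ` perp_in UNIV X \<subseteq> perp_in UNIV (f ` X)"
    proof
      fix y assume "y \<in> f ` perp_in UNIV X"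
      then obtain a where a: "a \<in> perp_in UNIV X" and y: "y = f a" by auto
      have "\<forall>x\<in>X. f a * f x = 0 \<and> f x * f a = 0"
        using a f0 unfolding perp_in_def by (metis (mono_tags, lifting) assms(3) mem_Collect_eq)
      then show "y \<in> perp_in UNIV (f ` X)" unfolding perp_in_def y by auto
    qed
    show "perp_in UNIV (f ` X) \<subseteq> f ` perp_in UNIV X"
    proof
      fix y assume y: "y \<in> perp_in UNIV (f ` X)"
      obtain a where a: "y = f a" using assms(1) by (metis bij_def surjD)
      have "a \<in> perp_in UNIV X"
        using y unfolding a perp_in_def by (auto simp: assms(3)[rule_format, symmetric] inj)
      then show "y \<in> f ` perp_in UNIV X" using a by auto
    qed
  qed
qed

theorem proposition3p10:
  fixes sc :: "complex \<Rightarrow> 'a::{real_normed_algebra,banach} \<Rightarrow> 'a"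
    and st :: "'a \<Rightarrow> 'a"
    and G :: "('g, 'm) monoid_scheme"
    and \<alpha> :: "'g \<Rightarrow> 'a \<Rightarrow> 'a"
    and J :: "'a set" and H :: "'g set"
  assumes "cstar_dyn_system sc st G \<alpha>"
    and "regular_subsystem sc G \<alpha> J H"
    and "J \<noteq> {0}"
  shows "sub_induced_from sc G \<alpha> J H \<longleftrightarrow>
         (H = {g \<in> carrier G. \<alpha> g ` J = J} \<and>
          (\<forall>g1\<in>carrier G. \<forall>g2\<in>carrier G. g1 <#\<^bsub>G\<^esub> H \<noteq> g2 <#\<^bsub>G\<^esub> H \<longrightarrow>
              orthogonal_ideals (\<alpha> g1 ` J) (\<alpha> g2 ` J)))"
proof
  assume "sub_induced_from sc G \<alpha> J H"
  then show "H = {g \<in> carrier G. \<alpha> g ` J = J} \<and>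
          (\<forall>g1\<in>carrier G. \<forall>g2\<in>carrier G. g1 <#\<^bsub>G\<^esub> H \<noteq> g2 <#\<^bsub>G\<^esub> H \<longrightarrow>
              orthogonal_ideals (\<alpha> g1 ` J) (\<alpha> g2 ` J))"
    unfolding sub_induced_from_def induced_from_def by blast
next
  assume R: "H = {g \<in> carrier G. \<alpha> g ` J = J} \<and>
          (\<forall>g1\<in>carrier G. \<forall>g2\<in>carrier G. g1 <#\<^bsub>G\<^esub> H \<noteq> g2 <#\<^bsub>G\<^esub> H \<longrightarrow>
              orthogonal_ideals (\<alpha> g1 ` J) (\<alpha> g2 ` J))"
  have cs: "cstar_algebra sc st" and grp: "group G"
    and aut: "\<And>g. g \<in> carrier G \<Longrightarrow> star_aut sc st (\<alpha> g)"
    and a1: "\<alpha> \<one>\<^bsub>G\<^esub> = id"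
    and amul: "\<And>g h. g \<in> carrier G \<Longrightarrow> h \<in> carrier G \<Longrightarrow> \<alpha> (g \<otimes>\<^bsub>G\<^esub> h) = \<alpha> g \<circ> \<alpha> h"
    using assms(1) unfolding cstar_dyn_system_def by auto
  have Jid: "closed_ideal sc J" using assms(2) unfolding regular_subsystem_def regular_ideal_def by blast
  then have Jm: "\<forall>x\<in>J. \<forall>b. x * b \<in> J \<and> b * x \<in> J" unfolding closed_ideal_def by blast
  define X where "X = (\<Union>g\<in>carrier G. \<alpha> g ` J)"
  define K where "K = perp_in UNIV (perp_in UNIV X)"
  have Xm: "\<forall>x\<in>X. \<forall>b. x * b \<in> X \<and> b * x \<in> X"
  proof (intro ballI allI)
    fix x b assume "x \<in> X"
    then obtain g j where g: "g \<in> carrier G" and j: "j \<in> J" and x: "x = \<alpha> g j"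
      unfolding X_def by auto
    have sa: "bij (\<alpha> g)" "\<forall>x y. \<alpha> g (x * y) = \<alpha> g x * \<alpha> g y"
      using aut[OF g] unfolding star_aut_def by auto
    obtain c where c: "b = \<alpha> g c" using sa(1) by (metis bij_def surjD)
    have "x * b = \<alpha> g (j * c)" "b * x = \<alpha> g (c * j)" using sa(2) x c by auto
    then show "x * b \<in> X \<and> b * x \<in> X" using Jm j g unfolding X_def by auto
  qed
  have one: "\<one>\<^bsub>G\<^esub> \<in> carrier G" using monoid.one_closed[OF group.is_monoid[OF grp]] .
  have JX: "J \<subseteq> X"
  proof
    fix j assume "j \<in> J"
    then have "j \<in> \<alpha> \<one>\<^bsub>G\<^esub> ` J" using a1 by simp
    then show "j \<in> X" unfolding X_def using one by blast
  qed
  have JK: "J \<subseteq> K" unfolding K_def using JX perp_sym by blast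
  obtain j where "j \<in> J" "j \<noteq> 0" using assms(3) Jid unfolding closed_ideal_def by blast
  then have Kne: "K \<noteq> {0}" using JK by blast
  have Kreg: "regular_ideal sc K"
    unfolding regular_ideal_def K_def perp3
    using perp_closed_ideal[OF cs perp_mult[OF Xm]] by simp
  have Kinv: "\<alpha> g ` K = K" if g: "g \<in> carrier G" for g
  proof -
    have sa: "bij (\<alpha> g)" "\<forall>x y. \<alpha> g (x + y) = \<alpha> g x + \<alpha> g y" "\<forall>x y. \<alpha> g (x * y) = \<alpha> g x * \<alpha> g y"
      using aut[OF g] unfolding star_aut_def by auto
    have "\<alpha> g ` X = X"
    proof
      show "\<alpha> g ` X \<subseteq> X"
      proof
        fix y assume "y \<in> \<alpha> g ` X"
        then obtain h j where h: "h \<in> carrier G" and j: "j \<in> J" and y: "y = \<alpha> g (\<alpha> h j)"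
          unfolding X_def by auto
        have "y = \<alpha> (g \<otimes>\<^bsub>G\<^esub> h) j" using amul[OF g h] y by simp
        moreover have "g \<otimes>\<^bsub>G\<^esub> h \<in> carrier G" using g h grp by (simp add: group.is_monoid monoid.m_closed)
        ultimately show "y \<in> X" using j unfolding X_def by auto
      qed
      show "X \<subseteq> \<alpha> g ` X"
      proof
        fix y assume "y \<in> X"
        then obtain h j where h: "h \<in> carrier G" and j: "j \<in> J" and y: "y = \<alpha> h j"
          unfolding X_def by auto
        define k where "k = inv\<^bsub>G\<^esub> g \<otimes>\<^bsub>G\<^esub> h"
        have k: "k \<in> carrier G" unfolding k_def using g h grp by (simp add: group.is_monoid monoid.m_closed)
        have "g \<otimes>\<^bsub>G\<^esub> k = h" unfolding k_def
          using group.inv_solve_left[OF grp k g h] unfolding k_def by simp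
        then have "\<alpha> g (\<alpha> k j) = \<alpha> h j" using amul[OF g k] by simp
        then have "y = \<alpha> g (\<alpha> k j)" using y by simp
        then show "y \<in> \<alpha> g ` X" using k j unfolding X_def by auto
      qed
    qed
    then show ?thesis unfolding K_def
      using image_perp[OF sa, of "perp_in UNIV X"] image_perp[OF sa, of X] by simp
  qed
  have Kpp: "perp_in K (perp_in K X) = K"
  proof
    show "perp_in K (perp_in K X) \<subseteq> K" unfolding perp_in_def by auto
    show "K \<subseteq> perp_in K (perp_in K X)"
    proof
      fix k assume k: "k \<in> K"
      have "k * a = 0 \<and> a * k = 0" if a: "a \<in> perp_in K X" for a
      proof -
        have "a \<in> perp_in UNIV X" using a unfolding perp_in_def by blast
        then show ?thesis using k unfolding K_def perp_in_def by blast
      qed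
      then show "k \<in> perp_in K (perp_in K X)" using k unfolding perp_in_def by blast
    qed
  qed
  have "induced_from G \<alpha> K J H"
    unfolding induced_from_def using R Kpp[unfolded X_def] by blast
  then show "sub_induced_from sc G \<alpha> J H"
    unfolding sub_induced_from_def using Kne Kreg Kinv JK by blast
qed

end
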